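(* The predicate modal logic $\mathsf{QGrz}+\Box\exists x P(x)\to\Diamond\exists x\Box P(x)$ is not a modal companion of $\mathsf{IQC}$; i.e., there is a formula $\varphi$ of intuitionistic predicate logic with $\mathsf{IQC}\nvdash\varphi$ but $\mathsf{QGrz}+\Box\exists x P(x)\to\Diamond\exists x\Box P(x)\vdash\varphi^t$.
   Context: $\mathsf{IQC}$ is intuitionistic predicate calculus. $\mathsf{QS4}$ is the predicate extension of the modal logic $\mathsf{S4}$, and $\mathsf{QGrz}$ is $\mathsf{QS4}$ plus the Grzegorczyk axiom $\Box(\Box(p\to\Box p)\to p)\to p$ (with $p$ ranging over formulas). $\Diamond=\neg\Box\neg$. The Gödel translation $(-)^t$ of intuitionistic predicate formulas into modal predicate formulas is given by $\bot^t=\bot$, $P(\bar x)^t=\Box P(\bar x)$, $(\varphi\wedge\psi)^t=\varphi^t\wedge\psi^t$, $(\varphi\vee\psi)^t=\varphi^t\vee\psi^t$, $(\varphi\to\psi)^t=\Box(\neg\varphi^t\vee\psi^t)$, $(\forall x\varphi)^t=\Box\forall x\varphi^t$, $(\exists x\varphi)^t=\exists x\varphi^t$. A modal predicate logic $\mathsf{M}$ is a modal companion of $\mathsf{IQC}$ if for every formula $\varphi$, $\mathsf{IQC}\vdash\varphi$ iff $\mathsf{M}\vdash\varphi^t$. *)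

theory Defs
  imports Main
begin

text \<open>Individual variables are natural numbers (de Bruijn indices); predicate letters
are natural numbers, applied to a list of variables.\<close>

datatype iform =
    IBot
  | IPred nat "nat list"
  | IAnd iform iform
  | IOr iform iform
  | IImp iform iform
  | IAll iform
  | IEx iform

datatype mform =
    MBot
  | MPred nat "nat list"
  | MAnd mform mform
  | MOr mform mform
  | MImp mform mform
  | MAll mform
  | MEx mform
  | MBox mform

definition MNeg :: "mform \<Rightarrow> mform" where
  "MNeg A = MImp A MBot"

definition MDia :: "mform \<Rightarrow> mform" where
  "MDia A = MNeg (MBox (MNeg A))"

definition ext_ren :: "(nat \<Rightarrow> nat) \<Rightarrow> nat \<Rightarrow> nat" where
  "ext_ren f n = (case n of 0 \<Rightarrow> 0 | Suc m \<Rightarrow> Suc (f m))"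

primrec iren :: "(nat \<Rightarrow> nat) \<Rightarrow> iform \<Rightarrow> iform" where
  "iren f IBot = IBot"
| "iren f (IPred p xs) = IPred p (map f xs)"
| "iren f (IAnd A B) = IAnd (iren f A) (iren f B)"
| "iren f (IOr A B) = IOr (iren f A) (iren f B)"
| "iren f (IImp A B) = IImp (iren f A) (iren f B)"
| "iren f (IAll A) = IAll (iren (ext_ren f) A)"
| "iren f (IEx A) = IEx (iren (ext_ren f) A)"

primrec mren :: "(nat \<Rightarrow> nat) \<Rightarrow> mform \<Rightarrow> mform" where
  "mren f MBot = MBot"
| "mren f (MPred p xs) = MPred p (map f xs)"
| "mren f (MAnd A B) = MAnd (mren f A) (mren f B)"
| "mren f (MOr A B) = MOr (mren f A) (mren f B)"
| "mren f (MImp A B) = MImp (mren f A) (mren f B)"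
| "mren f (MAll A) = MAll (mren (ext_ren f) A)"
| "mren f (MEx A) = MEx (mren (ext_ren f) A)"
| "mren f (MBox A) = MBox (mren f A)"

definition inst_ren :: "nat \<Rightarrow> nat \<Rightarrow> nat" where
  "inst_ren t n = (case n of 0 \<Rightarrow> t | Suc m \<Rightarrow> m)"

inductive iqc :: "iform \<Rightarrow> bool" where
  i_K:    "iqc (IImp A (IImp B A))"
| i_S:    "iqc (IImp (IImp A (IImp B C)) (IImp (IImp A B) (IImp A C)))"
| i_c1:   "iqc (IImp (IAnd A B) A)"
| i_c2:   "iqc (IImp (IAnd A B) B)"
| i_c3:   "iqc (IImp A (IImp B (IAnd A B)))"
| i_d1:   "iqc (IImp A (IOr A B))"
| i_d2:   "iqc (IImp B (IOr A B))"
| i_d3:   "iqc (IImp (IImp A C) (IImp (IImp B C) (IImp (IOr A B) C)))"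
| i_efq:  "iqc (IImp IBot A)"
| i_all:  "iqc (IImp (IAll A) (iren (inst_ren t) A))"
| i_ex:   "iqc (IImp (iren (inst_ren t) A) (IEx A))"
| i_mp:   "iqc (IImp A B) \<Longrightarrow> iqc A \<Longrightarrow> iqc B"
| i_genr: "iqc (IImp (iren Suc B) A) \<Longrightarrow> iqc (IImp B (IAll A))"
| i_exr:  "iqc (IImp A (iren Suc B)) \<Longrightarrow> iqc (IImp (IEx A) B)"

text \<open>QS4 over classical predicate logic (all axioms as schemata, so the theorem set is
closed under substitution), plus the Grzegorczyk schema and the schema instances of
the additional axiom (with P(x) replaced by an arbitrary formula A, whose de Bruijn
variable 0 plays the role of x).\<close>

inductive qgrz_plus :: "mform \<Rightarrow> bool" where
  m_K:    "qgrz_plus (MImp A (MImp B A))"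
| m_S:    "qgrz_plus (MImp (MImp A (MImp B C)) (MImp (MImp A B) (MImp A C)))"
| m_c1:   "qgrz_plus (MImp (MAnd A B) A)"
| m_c2:   "qgrz_plus (MImp (MAnd A B) B)"
| m_c3:   "qgrz_plus (MImp A (MImp B (MAnd A B)))"
| m_d1:   "qgrz_plus (MImp A (MOr A B))"
| m_d2:   "qgrz_plus (MImp B (MOr A B))"
| m_d3:   "qgrz_plus (MImp (MImp A C) (MImp (MImp B C) (MImp (MOr A B) C)))"
| m_efq:  "qgrz_plus (MImp MBot A)"
| m_dne:  "qgrz_plus (MImp (MNeg (MNeg A)) A)"
| m_all:  "qgrz_plus (MImp (MAll A) (mren (inst_ren t) A))"
| m_ex:   "qgrz_plus (MImp (mren (inst_ren t) A) (MEx A))"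
| m_boxK: "qgrz_plus (MImp (MBox (MImp A B)) (MImp (MBox A) (MBox B)))"
| m_boxT: "qgrz_plus (MImp (MBox A) A)"
| m_box4: "qgrz_plus (MImp (MBox A) (MBox (MBox A)))"
| m_grz:  "qgrz_plus (MImp (MBox (MImp (MBox (MImp A (MBox A))) A)) A)"
| m_extra: "qgrz_plus (MImp (MBox (MEx A)) (MDia (MEx (MBox A))))"
| m_mp:   "qgrz_plus (MImp A B) \<Longrightarrow> qgrz_plus A \<Longrightarrow> qgrz_plus B"
| m_nec:  "qgrz_plus A \<Longrightarrow> qgrz_plus (MBox A)"
| m_genr: "qgrz_plus (MImp (mren Suc B) A) \<Longrightarrow> qgrz_plus (MImp B (MAll A))"
| m_exr:  "qgrz_plus (MImp A (mren Suc B)) \<Longrightarrow> qgrz_plus (MImp (MEx A) B)"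

primrec goedel :: "iform \<Rightarrow> mform" where
  "goedel IBot = MBot"
| "goedel (IPred p xs) = MBox (MPred p xs)"
| "goedel (IAnd A B) = MAnd (goedel A) (goedel B)"
| "goedel (IOr A B) = MOr (goedel A) (goedel B)"
| "goedel (IImp A B) = MBox (MOr (MNeg (goedel A)) (goedel B))"
| "goedel (IAll A) = MBox (MAll (goedel A))"
| "goedel (IEx A) = MEx (goedel A)"

end

theory Submission
  imports Defs
begin

section \<open>Kripke countermodel for IQC (constant domain nat, worlds nat)\<close>

definition scons :: "nat \<Rightarrow> (nat \<Rightarrow> nat) \<Rightarrow> nat \<Rightarrow> nat" where
  "scons d e = (\<lambda>n. case n of 0 \<Rightarrow> d | Suc m \<Rightarrow> e m)"

primrec frc :: "nat \<Rightarrow> (nat \<Rightarrow> nat) \<Rightarrow> iform \<Rightarrow> bool" where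
  "frc n e IBot = False"
| "frc n e (IPred p xs) = (\<forall>i\<in>set xs. e i < n)"
| "frc n e (IAnd A B) = (frc n e A \<and> frc n e B)"
| "frc n e (IOr A B) = (frc n e A \<or> frc n e B)"
| "frc n e (IImp A B) = (\<forall>m\<ge>n. frc m e A \<longrightarrow> frc m e B)"
| "frc n e (IAll A) = (\<forall>m\<ge>n. \<forall>d. frc m (scons d e) A)"
| "frc n e (IEx A) = (\<exists>d. frc n (scons d e) A)"

lemma frc_mono: "frc n e A \<Longrightarrow> n \<le> m \<Longrightarrow> frc m e A"
proof (induction A arbitrary: n m e)
  case (IPred p xs) then show ?case by fastforce
next
  case (IAnd A B) then show ?case by auto
next
  case (IOr A B) then show ?case by auto
next
  case (IImp A B) then show ?case by auto
next
  case (IAll A) then show ?case by auto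
next
  case (IEx A) then show ?case by auto
qed simp

lemma scons_ext: "scons d e \<circ> ext_ren f = scons d (e \<circ> f)"
  by (auto simp: scons_def ext_ren_def fun_eq_iff split: nat.splits)

lemma frc_ren: "frc n e (iren f A) = frc n (e \<circ> f) A"
  by (induction A arbitrary: n e f) (auto simp: scons_ext)

lemma scons_inst2: "e \<circ> inst_ren t = scons (e t) e"
  by (auto simp: scons_def inst_ren_def fun_eq_iff split: nat.splits)

lemma scons_Suc: "scons d e \<circ> Suc = e"
  by (auto simp: scons_def fun_eq_iff)

lemma iqc_sound: "iqc A \<Longrightarrow> frc n e A"
proof (induction A arbitrary: n e rule: iqc.induct)
  case (i_d3 A C B) then show ?case by auto
next
  case (i_S A B C) then show ?case by simp (meson order.trans order_refl)
next
  case (i_all A t) then show ?case by (auto simp: frc_ren scons_inst2)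
next
  case (i_ex t A) then show ?case by (auto simp: frc_ren scons_inst2)
next
  case (i_mp A B) then show ?case by fastforce
next
  case (i_genr B A)
  show ?case
  proof (simp, intro allI impI)
    fix m k d assume "n \<le> m" "frc m e B" "m \<le> k"
    then have "frc k e B" using frc_mono by blast
    then have "frc k (scons d e) (iren Suc B)" by (simp add: frc_ren scons_Suc)
    then show "frc k (scons d e) A" using i_genr.IH[of k "scons d e"] by auto
  qed
next
  case (i_exr A B)
  have "frc m e B" if "n \<le> m" "frc m (scons d e) A" for m d
  proof -
    have "frc m (scons d e) (iren Suc B)" using i_exr.IH[of m "scons d e"] that by auto
    then show "frc m e B" by (simp add: frc_ren scons_Suc)
  qed
  then show ?case by auto
qed (auto intro: frc_mono)

definition pP :: iform where "pP = IPred 0 [0]"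
definition phi :: iform where
  "phi = IImp (IAll (IImp (IImp pP IBot) IBot)) (IImp (IImp (IAll pP) IBot) IBot)"

lemma aux_ex: "\<exists>k\<ge>m. (d::nat) < k"
  by (intro exI[of _ "Suc (max d m)"]) auto

lemma not_iqc_phi: "\<not> iqc phi"
proof
  assume "iqc phi"
  then have "frc 0 id phi" by (rule iqc_sound)
  moreover have "frc 0 id (IAll (IImp (IImp pP IBot) IBot))"
    by (auto simp: pP_def scons_def intro: aux_ex)
  moreover have "\<not> frc m id (IAll pP)" for m
    by (auto simp: pP_def scons_def intro!: exI[of _ m])
  ultimately show False unfolding phi_def frc.simps by (meson order_refl)
qed

section \<open>Derivations from hypotheses and the deduction theorem\<close>

inductive der :: "mform set \<Rightarrow> mform \<Rightarrow> bool" for G where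
  dax: "qgrz_plus A \<Longrightarrow> der G A"
| dhyp: "A \<in> G \<Longrightarrow> der G A"
| dmp: "der G (MImp A B) \<Longrightarrow> der G A \<Longrightarrow> der G B"

lemma der_empty: "der {} A \<Longrightarrow> qgrz_plus A"
  by (induction rule: der.induct) (auto intro: m_mp)

lemma imp_refl: "qgrz_plus (MImp A A)"
proof -
  have 1: "qgrz_plus (MImp (MImp A (MImp (MImp A A) A)) (MImp (MImp A (MImp A A)) (MImp A A)))"
    by (rule m_S)
  have 2: "qgrz_plus (MImp A (MImp (MImp A A) A))" by (rule m_K)
  have 3: "qgrz_plus (MImp A (MImp A A))" by (rule m_K)
  show ?thesis using m_mp[OF m_mp[OF 1 2] 3] .
qed

lemma deduction: "der (insert H G) B \<Longrightarrow> der G (MImp H B)"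
proof (induction rule: der.induct)
  case (dax A)
  show ?case by (rule dmp[OF der.dax[OF m_K] der.dax[OF dax]])
next
  case (dhyp A)
  show ?case
  proof (cases "A = H")
    case True then show ?thesis by (simp add: der.dax imp_refl)
  next
    case False
    then have "A \<in> G" using dhyp by simp
    then show ?thesis by (rule dmp[OF der.dax[OF m_K] der.dhyp])
  qed
next
  case (dmp A B)
  show ?case by (rule der.dmp[OF der.dmp[OF der.dax[OF m_S] dmp.IH(1)] dmp.IH(2)])
qed

lemma der_mono: "der G A \<Longrightarrow> G \<subseteq> G' \<Longrightarrow> der G' A"
  by (induction rule: der.induct) (auto intro: der.intros)

lemma thm_of: "der {} A \<Longrightarrow> qgrz_plus A" by (rule der_empty)

lemma H1: "A \<in> G \<Longrightarrow> der G A" by (rule dhyp)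
lemma AX: "qgrz_plus A \<Longrightarrow> der G A" by (rule dax)
lemma MP: "der G (MImp A B) \<Longrightarrow> der G A \<Longrightarrow> der G B" by (rule dmp)

lemma ccontr_der: "der (insert (MNeg A) G) MBot \<Longrightarrow> der G A"
proof -
  assume "der (insert (MNeg A) G) MBot"
  then have "der G (MNeg (MNeg A))" unfolding MNeg_def[of "MNeg A"] by (rule deduction)
  then show ?thesis by (rule MP[OF AX[OF m_dne]])
qed

lemma negI: "der (insert A G) MBot \<Longrightarrow> der G (MNeg A)"
  unfolding MNeg_def by (rule deduction)

lemma negE: "der G (MNeg A) \<Longrightarrow> der G A \<Longrightarrow> der G B"
  unfolding MNeg_def by (rule MP[OF AX[OF m_efq] MP])

lemma disjE_der: "der G (MOr A B) \<Longrightarrow> der (insert A G) C \<Longrightarrow> der (insert B G) C \<Longrightarrow> der G C"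
  by (rule MP[OF MP[OF MP[OF AX[OF m_d3] deduction] deduction]])

lemma boxE: "der G (MBox A) \<Longrightarrow> der G A" by (rule MP[OF AX[OF m_boxT]])
lemma box4: "der G (MBox A) \<Longrightarrow> der G (MBox (MBox A))" by (rule MP[OF AX[OF m_box4]])
lemma boxK: "der G (MBox (MImp A B)) \<Longrightarrow> der G (MBox A) \<Longrightarrow> der G (MBox B)"
  by (rule MP[OF MP[OF AX[OF m_boxK]]])

lemma mp_ax: "qgrz_plus (MImp A B) \<Longrightarrow> der G A \<Longrightarrow> der G B"
  by (rule MP[OF AX])

lemma mp_ax2: "qgrz_plus (MImp A (MImp B C)) \<Longrightarrow> der G A \<Longrightarrow> der G B \<Longrightarrow> der G C"
  by (rule MP[OF MP[OF AX]])

lemma box_rule2: "qgrz_plus (MImp X (MImp Y Z)) \<Longrightarrow> qgrz_plus (MImp (MBox X) (MImp (MBox Y) (MBox Z)))"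
proof -
  assume a: "qgrz_plus (MImp X (MImp Y Z))"
  have "der {MBox Y, MBox X} (MBox (MImp Y Z))"
    by (rule boxK[OF AX[OF m_nec[OF a]]]) (rule H1, simp)
  then have "der {MBox Y, MBox X} (MBox Z)"
    by (rule boxK) (rule H1, simp)
  then show ?thesis by (intro thm_of deduction)
qed

lemma box_rule1: "qgrz_plus (MImp X Z) \<Longrightarrow> qgrz_plus (MImp (MBox X) (MBox Z))"
  by (rule m_mp[OF m_boxK m_nec])

definition "P0 = MPred 0 [0]"
definition "BP = MBox P0"
definition "QQ = MAll BP"
definition "BB = MBox QQ"
definition "AA = MOr (MNeg BP) QQ"
definition "NP = MBox (MOr (MNeg BP) MBot)"
definition "NNP = MBox (MOr (MNeg NP) MBot)"
definition "HH = MBox (MAll NNP)"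
definition "NB = MBox (MOr (MNeg BB) MBot)"
definition "GG = MBox (MOr (MNeg NB) MBot)"

lemmas fdefs = P0_def BP_def QQ_def BB_def AA_def NP_def NNP_def HH_def NB_def GG_def MNeg_def

lemma goedel_phi: "goedel phi = MBox (MOr (MNeg HH) GG)"
  by (simp add: phi_def pP_def fdefs)

lemma renA: "mren (inst_ren 0) AA = AA" by (simp add: fdefs inst_ren_def ext_ren_def)
lemma renNNP: "mren (inst_ren 0) NNP = NNP" by (simp add: fdefs inst_ren_def ext_ren_def)
lemma renSuc1: "mren Suc (MNeg (MEx AA)) = MNeg (MEx AA)" by (simp add: fdefs ext_ren_def)
lemma renSuc2: "mren Suc (MImp HH (MImp NB MBot)) = MImp HH (MImp NB MBot)"
  by (simp add: fdefs ext_ren_def)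

lemma exA: "qgrz_plus (MImp AA (MEx AA))"
  using m_ex[of 0 AA] renA by simp

lemma allNNP: "qgrz_plus (MImp (MAll NNP) NNP)"
  using m_all[of NNP 0] renNNP by simp

lemma L_negEx_BP: "qgrz_plus (MImp (MNeg (MEx AA)) BP)"
proof -
  let ?G = "{MNeg BP, MNeg (MEx AA)}"
  have "der ?G AA" unfolding AA_def by (rule mp_ax[OF m_d1]) (rule H1, simp)
  then have "der ?G (MEx AA)" by (rule mp_ax[OF exA])
  then have "der ?G MBot" by (rule negE[rotated]) (rule H1, simp)
  then have "der {MNeg (MEx AA)} BP" by (rule ccontr_der)
  then show ?thesis by (intro thm_of deduction)
qed

lemma L1: "qgrz_plus (MEx AA)"
proof -
  have q: "qgrz_plus (MImp (MNeg (MEx AA)) QQ)"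
    unfolding QQ_def by (rule m_genr) (simp only: renSuc1 L_negEx_BP)
  let ?G = "{MNeg (MEx AA)}"
  have "der ?G QQ" by (rule mp_ax[OF q]) (rule H1, simp)
  then have "der ?G AA" unfolding AA_def by (rule mp_ax[OF m_d2])
  then have "der ?G (MEx AA)" by (rule mp_ax[OF exA])
  then have "der ?G MBot" by (rule negE[rotated]) (rule H1, simp)
  then show ?thesis by (rule thm_of[OF ccontr_der])
qed

lemma L2: "qgrz_plus (MNeg (MBox (MNeg (MEx (MBox AA)))))"
  using m_mp[OF m_extra[of AA] m_nec[OF L1]] unfolding MDia_def .

lemma L_BP_A_Q: "qgrz_plus (MImp BP (MImp AA QQ))"
proof -
  have "der {AA, BP} QQ"
  proof (rule disjE_der[of _ "MNeg BP" QQ])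
    show "der {AA, BP} (MOr (MNeg BP) QQ)" unfolding AA_def by (rule H1) simp
    show "der (insert (MNeg BP) {AA, BP}) QQ" by (rule negE[of _ BP]; rule H1; simp)
    show "der (insert QQ {AA, BP}) QQ" by (rule H1) simp
  qed
  then show ?thesis by (intro thm_of deduction)
qed

lemma C5: "qgrz_plus (MImp (MBox AA) (MImp NB (MOr (MNeg BP) MBot)))"
proof -
  let ?G = "{NB, MBox AA}"
  have "der (insert BP ?G) MBot"
  proof -
    have "der (insert BP ?G) (MBox BP)" unfolding BP_def by (rule box4, rule H1) simp
    then have b: "der (insert BP ?G) BB"
      unfolding BB_def by (rule mp_ax2[OF box_rule2[OF L_BP_A_Q]]) (rule H1, simp)
    have "der (insert BP ?G) (MOr (MNeg BB) MBot)"
      unfolding NB_def by (rule boxE, rule H1[unfolded NB_def]) simp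
    then show ?thesis
    proof (rule disjE_der)
      show "der (insert (MNeg BB) (insert BP ?G)) MBot"
        by (rule negE[of _ BB]) (rule H1, simp, rule der_mono[OF b], blast)
      show "der (insert MBot (insert BP ?G)) MBot" by (rule H1) simp
    qed
  qed
  then have "der ?G (MNeg BP)" by (rule negI)
  then have "der ?G (MOr (MNeg BP) MBot)" by (rule mp_ax[OF m_d1])
  then show ?thesis by (intro thm_of deduction)
qed

lemma C5b: "qgrz_plus (MImp (MBox AA) (MImp NB NP))"
proof -
  have "der {NB, MBox AA} NP"
  proof -
    have a: "der {NB, MBox AA} (MBox (MBox AA))" by (rule box4, rule H1) simp
    have b: "der {NB, MBox AA} (MBox NB)" unfolding NB_def by (rule box4, rule H1[unfolded NB_def]) simp
    show ?thesis unfolding NP_def by (rule mp_ax2[OF box_rule2[OF C5] a b])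
  qed
  then show ?thesis by (intro thm_of deduction)
qed

lemma C6: "qgrz_plus (MImp (MBox AA) (MImp HH (MImp NB MBot)))"
proof -
  let ?G = "{NB, HH, MBox AA}"
  have np: "der ?G NP" by (rule mp_ax2[OF C5b]; rule H1; simp)
  have "der ?G (MAll NNP)" unfolding HH_def by (rule boxE, rule H1[unfolded HH_def]) simp
  then have "der ?G NNP" by (rule mp_ax[OF allNNP])
  then have "der ?G (MOr (MNeg NP) MBot)" unfolding NNP_def by (rule boxE)
  then have "der ?G MBot"
  proof (rule disjE_der)
    show "der (insert (MNeg NP) ?G) MBot"
      by (rule negE[of _ NP]) (rule H1, simp, rule der_mono[OF np], blast)
    show "der (insert MBot ?G) MBot" by (rule H1) simp
  qed
  then show ?thesis by (intro thm_of deduction)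
qed

lemma C7: "qgrz_plus (MImp HH (MImp NB (MNeg (MEx (MBox AA)))))"
proof -
  have e: "qgrz_plus (MImp (MEx (MBox AA)) (MImp HH (MImp NB MBot)))"
    by (rule m_exr) (simp only: renSuc2 C6)
  have "der {MEx (MBox AA), NB, HH} MBot" by (rule MP[OF mp_ax2[OF e]]; rule H1; simp)
  then have "der {NB, HH} (MNeg (MEx (MBox AA)))" by (rule negI)
  then show ?thesis by (intro thm_of deduction)
qed

lemma C8: "qgrz_plus (MImp HH GG)"
proof -
  have "der {NB, HH} MBot"
  proof -
    have a: "der {NB, HH} (MBox HH)" unfolding HH_def by (rule box4, rule H1[unfolded HH_def]) simp
    have b: "der {NB, HH} (MBox NB)" unfolding NB_def by (rule box4, rule H1[unfolded NB_def]) simp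
    have "der {NB, HH} (MBox (MNeg (MEx (MBox AA))))" by (rule mp_ax2[OF box_rule2[OF C7] a b])
    then show ?thesis by (rule negE[OF AX[OF L2]])
  qed
  then have "der {HH} (MNeg NB)" by (rule negI)
  then have "der {HH} (MOr (MNeg NB) MBot)" by (rule mp_ax[OF m_d1])
  then have c: "qgrz_plus (MImp HH (MOr (MNeg NB) MBot))" by (intro thm_of deduction)
  have "der {HH} (MBox HH)" unfolding HH_def by (rule box4, rule H1[unfolded HH_def]) simp
  then have "der {HH} GG" unfolding GG_def by (rule mp_ax[OF box_rule1[OF c]])
  then show ?thesis by (intro thm_of deduction)
qed

lemma C9: "qgrz_plus (MOr (MNeg HH) GG)"
proof -
  let ?G = "{MNeg (MOr (MNeg HH) GG)}"
  have "der (insert (MNeg HH) ?G) (MOr (MNeg HH) GG)" by (rule mp_ax[OF m_d1]) (rule H1, simp)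
  then have "der (insert (MNeg HH) ?G) MBot" by (rule negE[rotated]) (rule H1, simp)
  then have h: "der ?G HH" by (rule ccontr_der)
  then have "der ?G GG" by (rule mp_ax[OF C8])
  then have "der ?G (MOr (MNeg HH) GG)" by (rule mp_ax[OF m_d2])
  then have "der ?G MBot" by (rule negE[rotated]) (rule H1, simp)
  then show ?thesis by (rule thm_of[OF ccontr_der])
qed

theorem theorem5p12:
  shows "\<exists>\<phi>. \<not> iqc \<phi> \<and> qgrz_plus (goedel \<phi>)"
proof
  show "\<not> iqc phi \<and> qgrz_plus (goedel phi)"
    using not_iqc_phi m_nec[OF C9] unfolding goedel_phi by blast
qed

end
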